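(* Let $i<j$ be two consecutive $c$-positions in a word $u$ (i.e. $u$ has label $c$ at $i$ and $j$ and no $c$ strictly between them) with attributes $(x_i,y_i)$ and $(x_j,y_j)$, respectively. If $x_j > x_i$, then $r^u_j = r^u_i \mathsf{X}_c$.
   Context: $A$ is a finite alphabet. An $\mathsf{X}$-ranker is a nonempty word over $\{\mathsf{X}_a : a\in A\}$, evaluated on a word $w$ by: $\mathsf{X}_a(w)$ is the smallest $a$-position of $w$ and $r\mathsf{X}_a(w)$ is the smallest $a$-position greater than $r(w)$ (possibly undefined); $\mathsf{Y}$-rankers are defined symmetrically with "previous $a$-position". The attribute of position $i$ is $(x_i,y_i)$, with $x_i$ the length of a shortest $\mathsf{X}$-ranker reaching $i$ and $y_i$ the length of a shortest $\mathsf{Y}$-ranker reaching $i$. Let $R^u_i$ be the set of $\mathsf{X}$-rankers $r$ with $r(u)=i$ and $|r|=x_i$. The canonical $\mathsf{X}$-ranker $r^u_i\in R^u_i$ is defined by minimizing visited positions from right to left: $S_{x_i}=R^u_i$, and for $j<x_i$, letting $p_j$ be the minimal position of $u$ visited by the length-$j$ prefixes of rankers in $S_{j+1}$, $S_j$ consists of the rankers in $S_{j+1}$ whose length-$j$ prefix visits $p_j$; then $S_1=\{r^u_i\}$. *)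

theory Defs
  imports Main
begin

text \<open>Words are lists; positions are 0-indexed (0 ..< length u).
  A ranker is a nonempty list of letters: the list [a1,...,ak] stands for
  X_a1 X_a2 ... X_ak (resp. Y_a1 ... Y_ak).\<close>

definition nxt :: "'a list \<Rightarrow> 'a \<Rightarrow> nat \<Rightarrow> nat option" where
  "nxt u a lb = (if \<exists>q. lb \<le> q \<and> q < length u \<and> u ! q = a
                 then Some (LEAST q. lb \<le> q \<and> q < length u \<and> u ! q = a) else None)"

definition prv :: "'a list \<Rightarrow> 'a \<Rightarrow> nat \<Rightarrow> nat option" where
  "prv u a ub = (if \<exists>q. q < ub \<and> q < length u \<and> u ! q = a
                 then Some (GREATEST q. q < ub \<and> q < length u \<and> u ! q = a) else None)"

definition evalX :: "'a list \<Rightarrow> 'a list \<Rightarrow> nat option" where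
  "evalX u r = (if r = [] then None else
     foldl (\<lambda>po a. case po of None \<Rightarrow> None | Some p \<Rightarrow> nxt u a (Suc p)) (nxt u (hd r) 0) (tl r))"

definition evalY :: "'a list \<Rightarrow> 'a list \<Rightarrow> nat option" where
  "evalY u r = (if r = [] then None else
     foldl (\<lambda>po a. case po of None \<Rightarrow> None | Some p \<Rightarrow> prv u a p) (prv u (hd r) (length u)) (tl r))"

definition xattr :: "'a list \<Rightarrow> nat \<Rightarrow> nat" where
  "xattr u i = (LEAST n. \<exists>r. r \<noteq> [] \<and> length r = n \<and> evalX u r = Some i)"

definition yattr :: "'a list \<Rightarrow> nat \<Rightarrow> nat" where
  "yattr u i = (LEAST n. \<exists>r. r \<noteq> [] \<and> length r = n \<and> evalY u r = Some i)"

definition Rset :: "'a list \<Rightarrow> nat \<Rightarrow> 'a list set" where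
  "Rset u i = {r. r \<noteq> [] \<and> length r = xattr u i \<and> evalX u r = Some i}"

text \<open>Sdown u i d = S_{x_i - d}: S_{x_i} = R^u_i and S_j is obtained from S_{j+1} by keeping
  the rankers whose length-j prefix visits the minimal position p_j.\<close>
fun Sdown :: "'a list \<Rightarrow> nat \<Rightarrow> nat \<Rightarrow> 'a list set" where
  "Sdown u i 0 = Rset u i"
| "Sdown u i (Suc d) =
     (let j = xattr u i - Suc d;
          P = Sdown u i d;
          p = Min {q. \<exists>r\<in>P. evalX u (take j r) = Some q}
      in {r \<in> P. evalX u (take j r) = Some p})"

definition canonX :: "'a list \<Rightarrow> nat \<Rightarrow> 'a list" where
  "canonX u i = (THE r. r \<in> Sdown u i (xattr u i - 1))"

end

theory Submission
  imports Defs
begin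

lemma evalX_snoc:
  "r \<noteq> [] \<Longrightarrow> evalX u (r @ [a]) = (case evalX u r of None \<Rightarrow> None | Some p \<Rightarrow> nxt u a (Suc p))"
  by (cases r) (auto simp: evalX_def)

lemma evalX_single: "evalX u [a] = nxt u a 0"
  by (simp add: evalX_def)

lemma nxt_Some:
  assumes "nxt u a lb = Some q" shows "lb \<le> q \<and> q < length u \<and> u ! q = a"
proof -
  have ex: "\<exists>q. lb \<le> q \<and> q < length u \<and> u ! q = a"
    using assms by (auto simp: nxt_def split: if_splits)
  then have "q = (LEAST q. lb \<le> q \<and> q < length u \<and> u ! q = a)"
    using assms by (simp add: nxt_def)
  then show ?thesis using LeastI_ex[OF ex] by simp
qed

lemma nxt_least:
  assumes "nxt u a lb = Some q" "lb \<le> k" "k < length u" "u ! k = a" shows "q \<le> k"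
proof -
  have ex: "\<exists>q. lb \<le> q \<and> q < length u \<and> u ! q = a"
    using assms by (auto simp: nxt_def split: if_splits)
  then have "q = (LEAST q. lb \<le> q \<and> q < length u \<and> u ! q = a)"
    using assms by (simp add: nxt_def)
  then show ?thesis using assms by (simp add: Least_le)
qed

lemma nxt_eq:
  assumes "lb \<le> q" "q < length u" "u ! q = a" "\<forall>k. lb \<le> k \<and> k < q \<longrightarrow> u ! k \<noteq> a"
  shows "nxt u a lb = Some q"
proof -
  have "(LEAST q. lb \<le> q \<and> q < length u \<and> u ! q = a) = q"
    by (rule Least_equality) (use assms in \<open>auto simp: not_less[symmetric]\<close>)
  then show ?thesis using assms unfolding nxt_def by auto
qed

lemma evalX_Some:
  "evalX u r = Some p \<Longrightarrow> p < length u \<and> u ! p = last r"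
proof (induction r arbitrary: p rule: rev_induct)
  case Nil then show ?case by (simp add: evalX_def)
next
  case (snoc a rs)
  show ?case
  proof (cases "rs = []")
    case True
    then show ?thesis using snoc.prems nxt_Some[of u a 0 p] by (simp add: evalX_single)
  next
    case False
    then obtain p' where "nxt u a (Suc p') = Some p"
      using snoc.prems by (auto simp: evalX_snoc split: option.splits)
    then show ?thesis using nxt_Some by fastforce
  qed
qed

lemma evalX_prefix:
  "evalX u r = Some p \<Longrightarrow> 1 \<le> k \<Longrightarrow> k \<le> length r \<Longrightarrow> \<exists>q. evalX u (take k r) = Some q"
proof (induction r arbitrary: p rule: rev_induct)
  case Nil then show ?case by simp
next
  case (snoc a rs)
  show ?case
  proof (cases "k = length (rs @ [a])")
    case True then show ?thesis using snoc.prems by auto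
  next
    case False
    then have k: "k \<le> length rs" using snoc.prems by simp
    then have "rs \<noteq> []" using snoc.prems by auto
    then obtain p' where "evalX u rs = Some p'"
      using snoc.prems by (auto simp: evalX_snoc split: option.splits)
    then show ?thesis using snoc.IH[of p'] k snoc.prems by simp
  qed
qed

lemma reach: "p < length u \<Longrightarrow> evalX u (take (Suc p) u) = Some p"
proof (induction p)
  case 0
  then have "take (Suc 0) u = [u ! 0]" by (cases u) auto
  moreover have "nxt u (u ! 0) 0 = Some 0" by (rule nxt_eq) (use 0 in auto)
  ultimately show ?case by (simp add: evalX_single)
next
  case (Suc p)
  have t: "take (Suc (Suc p)) u = take (Suc p) u @ [u ! Suc p]"
    using Suc.prems by (simp add: take_Suc_conv_app_nth)
  have ne: "take (Suc p) u \<noteq> []" using Suc.prems by (cases u) auto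
  have "nxt u (u ! Suc p) (Suc p) = Some (Suc p)" by (rule nxt_eq) (use Suc.prems in auto)
  then show ?case using Suc t ne by (simp add: evalX_snoc)
qed

lemma xattr_props:
  assumes "p < length u"
  shows "1 \<le> xattr u p \<and> Rset u p \<noteq> {}"
proof -
  have ex: "\<exists>n r. r \<noteq> [] \<and> length r = n \<and> evalX u r = Some p"
    using reach[OF assms] assms by (intro exI[of _ "Suc p"] exI[of _ "take (Suc p) u"]) auto
  obtain r where "r \<noteq> [] \<and> length r = xattr u p \<and> evalX u r = Some p"
    using LeastI_ex[OF ex] unfolding xattr_def by blast
  then have "r \<in> Rset u p" unfolding Rset_def by simp
  moreover have "1 \<le> length r" using \<open>r \<noteq> [] \<and> length r = xattr u p \<and> evalX u r = Some p\<close> by (cases r) auto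
  ultimately show ?thesis using \<open>r \<noteq> [] \<and> length r = xattr u p \<and> evalX u r = Some p\<close> by auto
qed

lemma xattr_le: "r \<noteq> [] \<Longrightarrow> evalX u r = Some p \<Longrightarrow> xattr u p \<le> length r"
  unfolding xattr_def by (rule Least_le) blast

lemma Sdown_inv:
  assumes "p < length u"
  shows "d < xattr u p \<Longrightarrow> Sdown u p d \<subseteq> Rset u p \<and> Sdown u p d \<noteq> {} \<and>
    (\<forall>r\<in>Sdown u p d. \<forall>r'\<in>Sdown u p d. \<forall>k. xattr u p - d \<le> k \<and> k \<le> xattr u p
       \<longrightarrow> evalX u (take k r) = evalX u (take k r'))"
proof (induction d)
  case 0
  have "\<forall>r\<in>Rset u p. \<forall>r'\<in>Rset u p. evalX u (take (xattr u p) r) = evalX u (take (xattr u p) r')"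
  proof (intro ballI)
    fix r r' assume "r \<in> Rset u p" "r' \<in> Rset u p"
    then have "length r = xattr u p" "evalX u r = Some p" "length r' = xattr u p" "evalX u r' = Some p"
      unfolding Rset_def by blast+
    then have e: "evalX u r = evalX u r'" by simp
    have t1: "take (xattr u p) r = r" using \<open>length r = xattr u p\<close>[symmetric] by simp
    have t2: "take (xattr u p) r' = r'" using \<open>length r' = xattr u p\<close>[symmetric] by simp
    show "evalX u (take (xattr u p) r) = evalX u (take (xattr u p) r')" unfolding t1 t2 by (rule e)
  qed
  then have "\<forall>r\<in>Rset u p. \<forall>r'\<in>Rset u p. \<forall>k. xattr u p - 0 \<le> k \<and> k \<le> xattr u p
       \<longrightarrow> evalX u (take k r) = evalX u (take k r')"
  proof (intro ballI allI impI)
    fix r r' k assume "r \<in> Rset u p" "r' \<in> Rset u p" "xattr u p - 0 \<le> k \<and> k \<le> xattr u p"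
    moreover then have "k = xattr u p" by simp
    ultimately show "evalX u (take k r) = evalX u (take k r')" using \<open>\<forall>r\<in>Rset u p. \<forall>r'\<in>Rset u p. _\<close> by blast
  qed
  then show ?case unfolding Sdown.simps(1) using xattr_props[OF assms] by blast
next
  case (Suc d)
  define n where "n = xattr u p"
  define jj where "jj = n - Suc d"
  define P where "P = Sdown u p d"
  define Q where "Q = {q. \<exists>r\<in>P. evalX u (take jj r) = Some q}"
  have dlt: "d < xattr u p" using Suc.prems by simp
  have IHc: "P \<subseteq> Rset u p \<and> P \<noteq> {} \<and>
    (\<forall>r\<in>P. \<forall>r'\<in>P. \<forall>k. n - d \<le> k \<and> k \<le> n \<longrightarrow> evalX u (take k r) = evalX u (take k r'))"
    unfolding P_def n_def by (rule Suc.IH[OF dlt])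
  have IH: "P \<subseteq> Rset u p" "P \<noteq> {}"
    "\<forall>r\<in>P. \<forall>r'\<in>P. \<forall>k. n - d \<le> k \<and> k \<le> n \<longrightarrow> evalX u (take k r) = evalX u (take k r')"
    using IHc by blast+
  have jj: "1 \<le> jj" "jj \<le> n" using Suc.prems by (auto simp: jj_def n_def)
  have fin: "finite Q"
  proof (rule finite_subset)
    show "Q \<subseteq> {..<length u}" unfolding Q_def using evalX_Some by fastforce
  qed simp
  obtain r0 where r0: "r0 \<in> P" using IH by auto
  then have "evalX u r0 = Some p" "length r0 = n" using IH unfolding Rset_def n_def by auto
  then obtain q0 where "evalX u (take jj r0) = Some q0" using evalX_prefix[of u r0 p jj] jj by auto
  then have "Q \<noteq> {}" using r0 unfolding Q_def by auto
  then have "Min Q \<in> Q" using fin by simp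
  then obtain r1 where r1: "r1 \<in> P" "evalX u (take jj r1) = Some (Min Q)" unfolding Q_def by auto
  have S: "Sdown u p (Suc d) = {r \<in> P. evalX u (take jj r) = Some (Min Q)}"
    by (simp add: Let_def P_def Q_def jj_def n_def)
  show ?case
  proof (intro conjI)
    show "Sdown u p (Suc d) \<subseteq> Rset u p" using S IH by auto
    show "Sdown u p (Suc d) \<noteq> {}" using S r1 by auto
    show "\<forall>r\<in>Sdown u p (Suc d). \<forall>r'\<in>Sdown u p (Suc d). \<forall>k. xattr u p - Suc d \<le> k \<and> k \<le> xattr u p
       \<longrightarrow> evalX u (take k r) = evalX u (take k r')"
    proof (intro ballI allI impI)
      fix r r' k assume r: "r \<in> Sdown u p (Suc d)" and r': "r' \<in> Sdown u p (Suc d)"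
        and k: "xattr u p - Suc d \<le> k \<and> k \<le> xattr u p"
      show "evalX u (take k r) = evalX u (take k r')"
      proof (cases "k = jj")
        case True then show ?thesis using r r' S by simp
      next
        case False
        then have "n - d \<le> k \<and> k \<le> n" using k jj Suc.prems by (auto simp: jj_def n_def)
        moreover have "r \<in> P" "r' \<in> P" using r r' S by auto
        ultimately show ?thesis using IH(3) by blast
      qed
    qed
  qed
qed

lemma eq_by_prefixes:
  assumes "length r = n" "length r' = n" "evalX u r = Some p"
    "\<forall>k. 1 \<le> k \<and> k \<le> n \<longrightarrow> evalX u (take k r) = evalX u (take k r')"
  shows "r = r'"
proof (rule nth_equalityI)
  show "length r = length r'" using assms by simp
  fix idx assume idx: "idx < length r"
  obtain q where q: "evalX u (take (Suc idx) r) = Some q" using evalX_prefix[OF assms(3), of "Suc idx"] idx by auto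
  have "1 \<le> Suc idx \<and> Suc idx \<le> n" using idx assms(1) by simp
  then have q': "evalX u (take (Suc idx) r') = Some q" using assms(4) q by metis
  have "u ! q = last (take (Suc idx) r)" using evalX_Some[OF q] by simp
  also have "\<dots> = r ! idx" using idx by (simp add: take_Suc_conv_app_nth)
  finally have a: "u ! q = r ! idx" .
  have "u ! q = last (take (Suc idx) r')" using evalX_Some[OF q'] by simp
  also have "\<dots> = r' ! idx" using idx assms by (simp add: take_Suc_conv_app_nth)
  finally show "r ! idx = r' ! idx" using a by simp
qed

lemma canon_sing:
  assumes "p < length u"
  shows "Sdown u p (xattr u p - 1) = {canonX u p}"
proof -
  define n where "n = xattr u p"
  have n: "1 \<le> n" using xattr_props[OF assms] n_def by simp
  have inv: "Sdown u p (n - 1) \<subseteq> Rset u p" "Sdown u p (n - 1) \<noteq> {}"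
    "\<forall>r\<in>Sdown u p (n-1). \<forall>r'\<in>Sdown u p (n-1). \<forall>k. 1 \<le> k \<and> k \<le> n
       \<longrightarrow> evalX u (take k r) = evalX u (take k r')"
  proof -
    have dlt: "n - 1 < xattr u p" using n n_def by simp
    have c: "Sdown u p (n - 1) \<subseteq> Rset u p \<and> Sdown u p (n - 1) \<noteq> {} \<and>
    (\<forall>r\<in>Sdown u p (n - 1). \<forall>r'\<in>Sdown u p (n - 1). \<forall>k. n - (n - 1) \<le> k \<and> k \<le> n
       \<longrightarrow> evalX u (take k r) = evalX u (take k r'))"
      using Sdown_inv[OF assms dlt, folded n_def] .
    have e: "n - (n - 1) = 1" using n by simp
    show "Sdown u p (n - 1) \<subseteq> Rset u p" "Sdown u p (n - 1) \<noteq> {}"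
    "\<forall>r\<in>Sdown u p (n-1). \<forall>r'\<in>Sdown u p (n-1). \<forall>k. 1 \<le> k \<and> k \<le> n
       \<longrightarrow> evalX u (take k r) = evalX u (take k r')"
      using c unfolding e by blast+
  qed
  obtain a where a: "a \<in> Sdown u p (n - 1)" using inv by auto
  have all: "\<forall>b \<in> Sdown u p (n - 1). b = a"
  proof
    fix b assume b: "b \<in> Sdown u p (n - 1)"
    show "b = a"
    proof (rule eq_by_prefixes[of b n a u p])
      have "b \<in> Rset u p" "a \<in> Rset u p" using inv a b by blast+
      then show "length b = n" "length a = n" "evalX u b = Some p" unfolding Rset_def n_def by blast+
      show "\<forall>k. 1 \<le> k \<and> k \<le> n \<longrightarrow> evalX u (take k b) = evalX u (take k a)"
        using inv(3) a b by blast
    qed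
  qed
  then have S: "Sdown u p (n - 1) = {a}" using a by blast
  have "canonX u p = (THE r. r \<in> Sdown u p (n - 1))" unfolding canonX_def n_def by (rule refl)
  also have "\<dots> = a" unfolding S by simp
  finally have ca: "canonX u p = a" .
  have xn: "xattr u p = n" using n_def by simp
  show ?thesis unfolding xn ca by (rule S)
qed

theorem lemma6:
  fixes u :: "'a list" and c :: 'a and i j :: nat
  assumes "i < j" and "j < length u"
    and "u ! i = c" and "u ! j = c"
    and "\<forall>k. i < k \<and> k < j \<longrightarrow> u ! k \<noteq> c"
    and "xattr u j > xattr u i"
  shows "canonX u j = canonX u i @ [c]"
proof -
  define n where "n = xattr u i"
  have il: "i < length u" using assms by simp
  have n1: "1 \<le> n" using xattr_props[OF il] n_def by simp
  obtain r0 where r0: "r0 \<in> Rset u i" using xattr_props[OF il] by auto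
  have nx: "nxt u c (Suc i) = Some j" by (rule nxt_eq) (use assms in auto)
  have extend: "evalX u (s @ [c]) = Some j" if "s \<in> Rset u i" for s
    using that nx by (auto simp: Rset_def evalX_snoc)
  have "xattr u j \<le> Suc n"
    using xattr_le[OF _ extend[OF r0]] r0 by (simp add: Rset_def n_def)
  then have xj: "xattr u j = Suc n" using assms(6) n_def by simp
  define f where "f = (\<lambda>s::'a list. s @ [c])"
  have decomp: "take n r \<noteq> [] \<and> length (take n r) = n \<and> r = take n r @ [c] \<and> evalX u r = nxt u c (Suc q)"
    if "r \<in> Rset u j" "evalX u (take n r) = Some q" for r q
  proof -
    have len: "length r = Suc n" and ev: "evalX u r = Some j" using that xj by (auto simp: Rset_def)
    have "last r = c" using evalX_Some[OF ev] assms by simp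
    then have rr: "r = take n r @ [c]" using len
      by (metis append_butlast_last_id butlast_conv_take diff_Suc_1 list.size(3) nat.distinct(1))
    have ne: "take n r \<noteq> []" using n1 len by auto
    have "evalX u r = nxt u c (Suc q)" using evalX_snoc[OF ne, of u c] that(2) rr by simp
    then show ?thesis using rr ne len by simp
  qed
  have base: "Sdown u j (Suc 0) = f ` Sdown u i 0"
  proof -
    define Q where "Q = {q. \<exists>r\<in>Rset u j. evalX u (take n r) = Some q}"
    have S: "Sdown u j (Suc 0) = {r \<in> Rset u j. evalX u (take n r) = Some (Min Q)}"
      by (simp add: Let_def Q_def xj)
    have fin: "finite Q"
    proof (rule finite_subset)
      show "Q \<subseteq> {..<length u}" using evalX_Some unfolding Q_def by blast
    qed simp
    have iQ: "i \<in> Q"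
    proof -
      have "f r0 \<in> Rset u j" using extend[OF r0] r0 xj by (simp add: Rset_def f_def n_def)
      moreover have "take n (f r0) = r0" using r0 by (simp add: Rset_def f_def n_def)
      ultimately show ?thesis using r0 unfolding Q_def Rset_def by force
    qed
    have lb: "i \<le> q" if qQ: "q \<in> Q" for q
    proof (rule ccontr)
      assume "\<not> i \<le> q"
      obtain r where r: "r \<in> Rset u j" "evalX u (take n r) = Some q" using qQ unfolding Q_def by blast
      have "nxt u c (Suc q) = Some j" using decomp[OF r] r(1) by (simp add: Rset_def)
      then have "j \<le> i" using nxt_least[of u c "Suc q" j i] \<open>\<not> i \<le> q\<close> il assms by simp
      then show False using assms by simp
    qed
    have "Min Q = i" by (rule Min_eqI) (use fin iQ lb in auto)
    then have S2: "Sdown u j (Suc 0) = {r \<in> Rset u j. evalX u (take n r) = Some i}" using S by simp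
    show ?thesis
    proof
      show "Sdown u j (Suc 0) \<subseteq> f ` Sdown u i 0"
      proof
        fix r assume "r \<in> Sdown u j (Suc 0)"
        then have r: "r \<in> Rset u j" "evalX u (take n r) = Some i" using S2 by auto
        have "take n r \<in> Rset u i" using decomp[OF r] r by (simp add: Rset_def n_def)
        then show "r \<in> f ` Sdown u i 0" using decomp[OF r] unfolding f_def by force
      qed
      show "f ` Sdown u i 0 \<subseteq> Sdown u j (Suc 0)"
      proof
        fix r assume "r \<in> f ` Sdown u i 0"
        then obtain s where s: "s \<in> Rset u i" "r = s @ [c]" by (auto simp: f_def)
        then have "r \<in> Rset u j" using extend[OF s(1)] xj by (simp add: Rset_def n_def)
        moreover have "take n r = s" using s by (simp add: Rset_def n_def)
        ultimately show "r \<in> Sdown u j (Suc 0)" using S2 s by (simp add: Rset_def)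
      qed
    qed
  qed
  have step: "d < n \<Longrightarrow> Sdown u j (Suc d) = f ` Sdown u i d" for d
  proof (induction d)
    case 0 then show ?case using base by simp
  next
    case (Suc d)
    define jj where "jj = n - Suc d"
    define A where "A = Sdown u i d"
    have IH: "Sdown u j (Suc d) = f ` A" using Suc A_def by simp
    have lenA: "\<forall>s\<in>A. length s = n"
      using Sdown_inv[OF il, of d] Suc.prems unfolding A_def n_def Rset_def by auto
    have tk: "take jj (f s) = take jj s" if "s \<in> A" for s
      using lenA that by (simp add: f_def jj_def)
    have Qeq: "{q. \<exists>r\<in>f ` A. evalX u (take jj r) = Some q} = {q. \<exists>r\<in>A. evalX u (take jj r) = Some q}"
      using tk by auto
    have Sj: "Sdown u j (Suc (Suc d)) = {r \<in> f ` A. evalX u (take jj r) = Some (Min {q. \<exists>r\<in>f ` A. evalX u (take jj r) = Some q})}"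
      using IH by (simp add: Let_def xj jj_def)
    have Si: "Sdown u i (Suc d) = {r \<in> A. evalX u (take jj r) = Some (Min {q. \<exists>r\<in>A. evalX u (take jj r) = Some q})}"
      by (simp add: Let_def A_def jj_def n_def)
    show ?case unfolding Sj Si Qeq using tk by auto
  qed
  have "Sdown u j (xattr u j - 1) = f ` Sdown u i (xattr u i - 1)"
    using step[of "n - 1"] n1 xj n_def by simp
  then have "{canonX u j} = {f (canonX u i)}"
    using canon_sing[OF il] canon_sing[OF assms(2)] by simp
  then show ?thesis by (simp add: f_def)
qed

end
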